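(* In the storage model of the context, let $(\alpha_{ij})$ be a positive solution of the linear system \[ \sum_{j=1}^{\kappa_i}\alpha_{ij}=\lambda_i\ (i=1,\dots,\mathcal K),\qquad \sum_{i=1}^{\mathcal K}\sum_{j=1}^{\kappa_i}\alpha_{ij}\,\delta_{\ell,s^i_j}=\tfrac1n\ (\ell=1,\dots,n), \] and let the embedded load chain $X^e(m)$ be constructed using the Join the Shortest Queue routing policy. Then for every $x\in\mathbb N^n$, \[ \mathbf E[f(X^e(m+1))-f(X^e(m))\mid X^e(m)=x]=-2\sum_{i=1}^{\mathcal K}\sum_{j\ne j_{\min}^{(i)}}\alpha_{ij}\bigl(x_{s^i_j}-x_{s^i_{j_{\min}}(x)}\bigr)+1-\frac1n, \] where $f(y)=\sum_{l=1}^n\bigl(y_l-\frac1n\sum_{k=1}^ny_k\bigr)^2$ and $j^{(i)}_{\min}$ is the index with $s^i_{j^{(i)}_{\min}}=s^i_{j_{\min}}(x)$.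
   Context: Storage model: $n$ nodes, non-empty neighborhoods $S_1,\dots,S_{\mathcal K}\subset\{1,\dots,n\}$ covering $\{1,\dots,n\}$, $\kappa_i=|S_i|$, $S_i=\{s^i_1,\dots,s^i_{\kappa_i}\}$ a fixed enumeration. Items arrive at $S_i$ as independent Poisson processes with rates $\lambda_i>0$, $\sum_i\lambda_i=1$. $X^e(m)\in\mathbb N^n$ is the vector of node loads after the $m$-th arrival. For $x\in\mathbb N^n$, $s^i_{j_{\min}}(x)$ is the first node of $S_i$ (in the enumeration) at which $x$ is minimal over $S_i$. Join the Shortest Queue (JSQ) routing policy: an item arriving at $S_i$ when the configuration is $x$ is stored at node $s^i_{j_{\min}}(x)$. $\delta_{\ell,m}$ is the Kronecker delta. *)

theory Defs
  imports "HOL-Probability.Probability"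
begin

text \<open>Nodes are 0,...,n-1; neighbourhoods are indexed 0,...,K-1; the neighbourhood
  S i is given by its fixed enumeration, a list of nodes of length kappa_i = length (S i).
  Configurations are load vectors x :: nat => nat (only the components below n matter).\<close>

definition jmin :: "nat list \<Rightarrow> (nat \<Rightarrow> nat) \<Rightarrow> nat" where
  "jmin Sl x = (LEAST j. j < length Sl \<and> (\<forall>k < length Sl. x (Sl ! j) \<le> x (Sl ! k)))"

text \<open>Distribution of the neighbourhood of the next arrival (superposition of
  independent Poisson processes with rates lambda i, sum 1).\<close>
definition arrival_pmf :: "nat \<Rightarrow> (nat \<Rightarrow> real) \<Rightarrow> nat pmf" where
  "arrival_pmf K lam = embed_pmf (\<lambda>i. if i < K then lam i else 0)"

definition jsq_next :: "(nat \<Rightarrow> nat list) \<Rightarrow> (nat \<Rightarrow> nat) \<Rightarrow> nat \<Rightarrow> nat \<Rightarrow> nat" where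
  "jsq_next S x i = (let v = S i ! jmin (S i) x in x(v := x v + 1))"

text \<open>Transition kernel of the embedded load chain X^e under JSQ:
  law of X^e(m+1) given X^e(m) = x.\<close>
definition jsq_step :: "nat \<Rightarrow> (nat \<Rightarrow> real) \<Rightarrow> (nat \<Rightarrow> nat list) \<Rightarrow> (nat \<Rightarrow> nat) \<Rightarrow> (nat \<Rightarrow> nat) pmf" where
  "jsq_step K lam S x = map_pmf (jsq_next S x) (arrival_pmf K lam)"

definition fdev :: "nat \<Rightarrow> (nat \<Rightarrow> nat) \<Rightarrow> real" where
  "fdev n y = (\<Sum>l<n. (real (y l) - (1 / real n) * (\<Sum>k<n. real (y k)))\<^sup>2)"

end

theory Submission
  imports Defs
begin

lemma pmf_arrival:
  assumes lam_pos: "\<And>i. i < K \<Longrightarrow> lam i > 0" and lam_sum: "(\<Sum>i<K. lam i) = 1"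
  shows "pmf (arrival_pmf K lam) i = (if i < K then lam i else 0)"
  unfolding arrival_pmf_def
proof (rule pmf_embed_pmf)
  show "\<And>x. 0 \<le> (if x < K then lam x else 0)" using lam_pos by (simp add: less_imp_le)
  have "(\<integral>\<^sup>+ x. ennreal (if x < K then lam x else 0) \<partial>count_space UNIV)
        = (\<Sum>x\<in>{..<K}. ennreal (if x < K then lam x else 0))"
    by (rule nn_integral_count_space') auto
  also have "\<dots> = ennreal (\<Sum>x\<in>{..<K}. lam x)"
    using lam_pos by (subst sum_ennreal[symmetric]) (auto simp: less_imp_le)
  finally show "(\<integral>\<^sup>+ x. ennreal (if x < K then lam x else 0) \<partial>count_space UNIV) = 1"
    using lam_sum by simp
qed

lemma jmin_props:
  assumes "Sl \<noteq> []"
  shows "jmin Sl x < length Sl \<and> (\<forall>k < length Sl. x (Sl ! jmin Sl x) \<le> x (Sl ! k))"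
proof -
  let ?A = "(\<lambda>j. x (Sl ! j)) ` {..<length Sl}"
  have "Min ?A \<in> ?A" using assms by (intro Min_in) auto
  then obtain j where j: "j < length Sl" "x (Sl ! j) = Min ?A" by auto
  have "j < length Sl \<and> (\<forall>k < length Sl. x (Sl ! j) \<le> x (Sl ! k))"
    using j by auto
  then show ?thesis unfolding jmin_def by (rule LeastI)
qed

lemma fdev_alt:
  assumes "n > 0"
  shows "fdev n y = (\<Sum>l<n. real (y l)^2) - (\<Sum>k<n. real (y k))^2 / real n"
proof -
  let ?T = "\<Sum>k<n. real (y k)"
  have "fdev n y = (\<Sum>l<n. real (y l)^2 - 2 * (?T / real n) * real (y l) + (?T/real n)^2)"
    unfolding fdev_def by (intro sum.cong) (auto simp: power2_eq_square algebra_simps)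
  also have "\<dots> = (\<Sum>l<n. real (y l)^2) - 2 * (?T / real n) * ?T + real n * (?T/real n)^2"
    by (simp add: sum.distrib sum_subtractf sum_distrib_left)
  also have "\<dots> = (\<Sum>l<n. real (y l)^2) - ?T^2 / real n"
    using assms by (simp add: power2_eq_square field_simps)
  finally show ?thesis .
qed

lemma sum_upd:
  fixes g :: "nat \<Rightarrow> real" and x :: "nat \<Rightarrow> nat" and n v :: nat
  assumes "v < n"
  shows "(\<Sum>l<n. g ((x(v := x v + 1)) l)) = (\<Sum>l<n. g (x l)) - g (x v) + g (x v + 1)"
proof -
  have "(\<Sum>l<n. g ((x(v := x v + 1)) l)) = g (x v + 1) + (\<Sum>l\<in>{..<n}-{v}. g (x l))"
    using assms by (subst sum.remove[of _ v]) (auto intro!: sum.cong)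
  also have "(\<Sum>l\<in>{..<n}-{v}. g (x l)) = (\<Sum>l<n. g (x l)) - g (x v)"
    using assms by (subst sum_diff1) (auto simp del: finite_lessThan intro: finite_lessThan)
  finally show ?thesis by simp
qed

lemma fdev_step:
  assumes "v < n"
  shows "fdev n (x(v := x v + 1)) - fdev n x
       = 2 * real (x v) + 1 - (2 * (\<Sum>k<n. real (x k)) + 1) / real n"
proof -
  have n: "n > 0" using assms by simp
  have s1: "(\<Sum>l<n. real ((x(v := x v + 1)) l)^2) = (\<Sum>l<n. real (x l)^2) - real (x v)^2 + real (x v + 1)^2"
    using sum_upd[OF assms, of "\<lambda>a. real a ^ 2" x] by simp
  have s2: "(\<Sum>l<n. real ((x(v := x v + 1)) l)) = (\<Sum>l<n. real (x l)) + 1"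
    using sum_upd[OF assms, of "\<lambda>a. real a" x] by simp
  show ?thesis unfolding fdev_alt[OF n] s1 s2
    using n by (simp add: power2_eq_square field_simps)
qed

theorem lemma3p2:
  fixes n K :: nat and S :: "nat \<Rightarrow> nat list" and lam :: "nat \<Rightarrow> real"
    and \<alpha> :: "nat \<Rightarrow> nat \<Rightarrow> real" and x :: "nat \<Rightarrow> nat"
  assumes S_ne: "\<And>i. i < K \<Longrightarrow> S i \<noteq> []"
    and S_dist: "\<And>i. i < K \<Longrightarrow> distinct (S i)"
    and S_sub: "\<And>i. i < K \<Longrightarrow> set (S i) \<subseteq> {..<n}"
    and S_cover: "(\<Union>i<K. set (S i)) = {..<n}"
    and lam_pos: "\<And>i. i < K \<Longrightarrow> lam i > 0"
    and lam_sum: "(\<Sum>i<K. lam i) = 1"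
    and alpha_pos: "\<And>i j. i < K \<Longrightarrow> j < length (S i) \<Longrightarrow> \<alpha> i j > 0"
    and alpha_row: "\<And>i. i < K \<Longrightarrow> (\<Sum>j<length (S i). \<alpha> i j) = lam i"
    and alpha_col: "\<And>l. l < n \<Longrightarrow>
        (\<Sum>i<K. \<Sum>j<length (S i). \<alpha> i j * (if l = S i ! j then 1 else 0)) = 1 / real n"
  shows "measure_pmf.expectation (jsq_step K lam S x) (\<lambda>y. fdev n y - fdev n x)
       = - 2 * (\<Sum>i<K. \<Sum>j\<in>{..<length (S i)} - {jmin (S i) x}.
                  \<alpha> i j * (real (x (S i ! j)) - real (x (S i ! jmin (S i) x))))
         + 1 - 1 / real n"
proof -
  define v where "v i = S i ! jmin (S i) x" for i
  define T where "T = (\<Sum>k<n. real (x k))"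
  have K: "K > 0" using lam_sum by (cases K) auto
  have vn: "v i < n" if "i < K" for i
    using jmin_props[OF S_ne[OF that], of x] S_sub[OF that] unfolding v_def by (meson lessThan_iff nth_mem subsetD)
  have n: "n > 0" using vn[OF K] by simp
  have nxt: "jsq_next S x i = x(v i := x (v i) + 1)" for i
    unfolding jsq_next_def v_def Let_def by simp
  have "measure_pmf.expectation (jsq_step K lam S x) (\<lambda>y. fdev n y - fdev n x)
      = measure_pmf.expectation (arrival_pmf K lam) (\<lambda>i. fdev n (jsq_next S x i) - fdev n x)"
    unfolding jsq_step_def by simp
  also have "\<dots> = (\<Sum>i<K. (fdev n (jsq_next S x i) - fdev n x) * pmf (arrival_pmf K lam) i)"
    by (rule integral_measure_pmf_real) (auto simp: set_pmf_eq pmf_arrival[OF lam_pos lam_sum] split: if_splits)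
  also have "\<dots> = (\<Sum>i<K. lam i * (2 * real (x (v i)) + 1 - (2 * T + 1) / real n))"
    proof (intro sum.cong refl)
    fix i assume i: "i \<in> {..<K}"
    show "(fdev n (jsq_next S x i) - fdev n x) * pmf (arrival_pmf K lam) i
         = lam i * (2 * real (x (v i)) + 1 - (2 * T + 1) / real n)"
      using i fdev_step[OF vn, of i x] unfolding nxt T_def
      by (simp add: pmf_arrival[OF lam_pos lam_sum] mult.commute)
  qed
  also have "\<dots> = 2 * (\<Sum>i<K. lam i * real (x (v i))) + 1 - (2 * T + 1) / real n"
  proof -
    have "(\<Sum>i<K. lam i * (2 * real (x (v i)) + 1 - (2 * T + 1) / real n))
        = (\<Sum>i<K. 2 * (lam i * real (x (v i))) + lam i * (1 - (2 * T + 1) / real n))"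
      by (intro sum.cong) (auto simp: algebra_simps)
    also have "\<dots> = 2 * (\<Sum>i<K. lam i * real (x (v i))) + (\<Sum>i<K. lam i) * (1 - (2 * T + 1) / real n)"
      by (simp add: sum.distrib sum_distrib_left sum_distrib_right)
    finally show ?thesis using lam_sum by simp
  qed
  finally have L: "measure_pmf.expectation (jsq_step K lam S x) (\<lambda>y. fdev n y - fdev n x)
      = 2 * (\<Sum>i<K. lam i * real (x (v i))) + 1 - (2 * T + 1) / real n" .
  have R1: "(\<Sum>j\<in>{..<length (S i)} - {jmin (S i) x}. \<alpha> i j * (real (x (S i ! j)) - real (x (v i))))
       = (\<Sum>j<length (S i). \<alpha> i j * real (x (S i ! j))) - lam i * real (x (v i))" if i: "i < K" for i
  proof -
    have "(\<Sum>j\<in>{..<length (S i)} - {jmin (S i) x}. \<alpha> i j * (real (x (S i ! j)) - real (x (v i))))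
        = (\<Sum>j<length (S i). \<alpha> i j * (real (x (S i ! j)) - real (x (v i))))"
      by (rule sum.mono_neutral_left) (auto simp: v_def)
    also have "\<dots> = (\<Sum>j<length (S i). \<alpha> i j * real (x (S i ! j))) - (\<Sum>j<length (S i). \<alpha> i j) * real (x (v i))"
      by (simp add: right_diff_distrib sum_subtractf sum_distrib_right)
    finally show ?thesis using alpha_row[OF i] by simp
  qed
  have R2: "(\<Sum>i<K. \<Sum>j<length (S i). \<alpha> i j * real (x (S i ! j))) = T / real n"
  proof -
    have "(\<Sum>i<K. \<Sum>j<length (S i). \<alpha> i j * real (x (S i ! j)))
        = (\<Sum>i<K. \<Sum>j<length (S i). \<Sum>l<n. \<alpha> i j * (if l = S i ! j then 1 else 0) * real (x l))"
    proof (intro sum.cong refl)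
      fix i j assume i: "i \<in> {..<K}" and j: "j \<in> {..<length (S i)}"
      have "S i ! j < n" using S_sub i j by (auto dest!: nth_mem)
      then show "\<alpha> i j * real (x (S i ! j)) = (\<Sum>l<n. \<alpha> i j * (if l = S i ! j then 1 else 0) * real (x l))"
      proof -
        have "(\<Sum>l<n. \<alpha> i j * (if l = S i ! j then 1 else 0) * real (x l))
            = (\<Sum>l<n. if l = S i ! j then \<alpha> i j * real (x l) else 0)"
          by (intro sum.cong) auto
        also have "\<dots> = \<alpha> i j * real (x (S i ! j))"
          using \<open>S i ! j < n\<close> by (simp add: sum.delta)
        finally show ?thesis by simp
      qed
    qed
    also have "\<dots> = (\<Sum>l<n. (\<Sum>i<K. \<Sum>j<length (S i). \<alpha> i j * (if l = S i ! j then 1 else 0)) * real (x l))"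
      by (simp add: sum_distrib_right sum.swap[of _ "{..<n}"])
    also have "\<dots> = (\<Sum>l<n. real (x l) / real n)"
      by (intro sum.cong) (auto simp: alpha_col)
    finally show ?thesis by (simp add: T_def sum_divide_distrib)
  qed
  have "- 2 * (\<Sum>i<K. \<Sum>j\<in>{..<length (S i)} - {jmin (S i) x}.
                  \<alpha> i j * (real (x (S i ! j)) - real (x (S i ! jmin (S i) x))))
      = - 2 * (\<Sum>i<K. (\<Sum>j<length (S i). \<alpha> i j * real (x (S i ! j))) - lam i * real (x (v i)))"
    using R1 by (simp add: v_def)
  also have "\<dots> = - 2 * (T / real n) + 2 * (\<Sum>i<K. lam i * real (x (v i)))"
    by (simp add: sum_subtractf R2)
  finally show ?thesis unfolding L using n by (simp add: field_simps)
qed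

end
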